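(* The function $\nu(x)$ is positive for $x\in(1,1.732]$; consequently $\mu(x)$ is decreasing on $(1,1.732]$.
   Context: For $x\ge1$ let $\psi_1(x)=\frac32\int_0^{\pi/2}(1-x^{-2}\sin^2u)^{3/2}\,du$, $\psi_2(x)=\frac32(1-x^{-2})^2\int_0^{\pi/2}\frac{\sin^4v}{\sqrt{1-(1-x^{-2})\sin^2v}}\,dv$, $\phi_1=\frac{4}{3\pi}\psi_1$, $\phi_2=\frac{16}{3\pi}\psi_2$. Let $\mu(x)=\frac{\psi_2'\psi_2+\psi_1'\psi_1}{\psi_2'\psi_1-\psi_1'\psi_2}$ and $\nu=(\phi_2'\phi_1-\phi_1'\phi_2)'(\phi_2'\phi_2+16\phi_1'\phi_1)-(\phi_2'\phi_1-\phi_1'\phi_2)(\phi_2'\phi_2+16\phi_1'\phi_1)'$, so that $\big(\frac{1}{4\mu}\big)'=\nu/(\phi_2'\phi_2+16\phi_1'\phi_1)^2$. *)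

theory Defs
  imports "HOL-Analysis.Analysis"
begin

definition psi1 :: "real \<Rightarrow> real" where
  "psi1 x = 3/2 * integral {0..pi/2} (\<lambda>u. (1 - sin u ^ 2 / x ^ 2) powr (3/2))"

definition psi2 :: "real \<Rightarrow> real" where
  "psi2 x = 3/2 * (1 - 1 / x ^ 2) ^ 2 *
     integral {0..pi/2} (\<lambda>v. sin v ^ 4 / sqrt (1 - (1 - 1 / x ^ 2) * sin v ^ 2))"

definition phi1 :: "real \<Rightarrow> real" where
  "phi1 x = 4 / (3 * pi) * psi1 x"

definition phi2 :: "real \<Rightarrow> real" where
  "phi2 x = 16 / (3 * pi) * psi2 x"

definition mu :: "real \<Rightarrow> real" where
  "mu x = (deriv psi2 x * psi2 x + deriv psi1 x * psi1 x) /
          (deriv psi2 x * psi1 x - deriv psi1 x * psi2 x)"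

definition nuA :: "real \<Rightarrow> real" where
  "nuA x = deriv phi2 x * phi1 x - deriv phi1 x * phi2 x"

definition nuB :: "real \<Rightarrow> real" where
  "nuB x = deriv phi2 x * phi2 x + 16 * deriv phi1 x * phi1 x"

definition nu :: "real \<Rightarrow> real" where
  "nu x = deriv nuA x * nuB x - nuA x * deriv nuB x"

end

theory Submission imports Defs begin

definition Y :: "real \<Rightarrow> real \<Rightarrow> real" where "Y x u = 1 - sin u ^ 2 / x ^ 2"
definition Z :: "real \<Rightarrow> real \<Rightarrow> real" where "Z x u = 1 - (1 - 1 / x ^ 2) * sin u ^ 2"

lemma sin2_le: "sin u ^ 2 \<le> (1::real)"
  by (simp add: abs_square_le_1)

lemma Y_pos: assumes "x > 1" shows "Y x u > 0"
proof -
  have x2: "x^2 > 1" using assms by (simp add: one_less_power)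
  have "sin u ^ 2 / x ^ 2 < 1" using sin2_le[of u] x2 by (simp add: divide_less_eq)
  then show ?thesis by (simp add: Y_def)
qed

lemma Y_le1: assumes "x > 1" shows "Y x u \<le> 1"
  using assms by (simp add: Y_def)

lemma Z_pos: assumes "x > 1" shows "Z x u > 0"
proof -
  have x2: "x^2 > 1" using assms by (simp add: one_less_power)
  have m: "0 < 1 - 1/x^2" "1 - 1/x^2 < 1" using x2 assms by (auto simp: divide_less_eq)
  have "(1 - 1 / x ^ 2) * sin u ^ 2 < 1"
    using mult_left_le[OF sin2_le[of u], of "1 - 1/x^2"] m by linarith
  then show ?thesis by (simp add: Z_def)
qed

lemma Y_deriv: assumes "x \<noteq> 0" shows "((\<lambda>x. Y x u) has_real_derivative 2 * sin u ^ 2 / x ^ 3) (at x)"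
  unfolding Y_def
  using assms by (auto intro!: derivative_eq_intros simp: field_simps power2_eq_square power3_eq_cube)

lemma Z_deriv: assumes "x \<noteq> 0" shows "((\<lambda>x. Z x u) has_real_derivative - 2 * sin u ^ 2 / x ^ 3) (at x)"
  unfolding Z_def
  using assms by (auto intro!: derivative_eq_intros simp: field_simps power2_eq_square power3_eq_cube)

lemma Y_cont: "continuous_on ({1<..} \<times> UNIV) (\<lambda>p. Y (fst p) (snd p))"
  unfolding Y_def by (intro continuous_intros) auto

lemma Z_cont: "continuous_on ({1<..} \<times> UNIV) (\<lambda>p. Z (fst p) (snd p))"
  unfolding Z_def by (intro continuous_intros) auto

lemma leib:
  fixes F Fx :: "real \<Rightarrow> real \<Rightarrow> real"
  assumes d: "\<And>x u. x > 1 \<Longrightarrow> ((\<lambda>x. F x u) has_real_derivative Fx x u) (at x)"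
    and c1: "\<And>x. x > 1 \<Longrightarrow> continuous_on {0..pi/2} (F x)"
    and c2: "continuous_on ({1<..} \<times> {0..pi/2}) (\<lambda>p. Fx (fst p) (snd p))"
    and x: "x > 1"
  shows "((\<lambda>x. integral {0..pi/2} (F x)) has_real_derivative integral {0..pi/2} (Fx x)) (at x)"
proof -
  have "((\<lambda>x. integral (cbox 0 (pi/2)) (F x)) has_real_derivative integral (cbox 0 (pi/2)) (Fx x)) (at x within {1<..})"
    apply (rule leibniz_rule_field_derivative)
    using d has_field_derivative_at_within apply blast
    subgoal for y using c1[of y] integrable_continuous_interval[of 0 "pi/2" "F y"] by (simp add: cbox_interval)
    subgoal using c2 by (simp add: cbox_interval split_beta')
    subgoal using x by simp
    by (rule convex_real_interval)
  moreover have "at x within {1<..} = at x" by (rule at_within_open) (use x in auto)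
  ultimately show ?thesis unfolding cbox_interval by metis
qed


lemma Y_pos': "(x::real) > 1 \<Longrightarrow> 1 - sin u ^ 2 / x ^ 2 > 0"
  using Y_pos[of x u] by (simp add: Y_def)
lemma Z_pos': "(x::real) > 1 \<Longrightarrow> 1 - (1 - 1 / x ^ 2) * sin u ^ 2 > 0"
  using Z_pos[of x u] by (simp add: Z_def)

lemma Yne: "1 < (x::real) \<Longrightarrow> x ^ 2 = sin u ^ 2 \<Longrightarrow> False"
  using sin2_le[of u] by (smt (verit) one_less_power zero_less_numeral)
lemma Zne: "1 < (x::real) \<Longrightarrow> (1 - 1 / x ^ 2) * sin u ^ 2 = 1 \<Longrightarrow> False"
  using Z_pos'[of x u] by simp

definition I1 :: "real \<Rightarrow> real" where "I1 x = integral {0..pi/2} (\<lambda>u. Y x u * sqrt (Y x u))"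
definition J1 :: "real \<Rightarrow> real" where "J1 x = integral {0..pi/2} (\<lambda>u. sin u ^ 2 * sqrt (Y x u))"
definition K1 :: "real \<Rightarrow> real" where "K1 x = integral {0..pi/2} (\<lambda>u. sin u ^ 4 / sqrt (Y x u))"
definition G :: "real \<Rightarrow> real" where "G x = integral {0..pi/2} (\<lambda>u. sin u ^ 4 / sqrt (Z x u))"
definition H :: "real \<Rightarrow> real" where "H x = integral {0..pi/2} (\<lambda>u. sin u ^ 6 / (Z x u * sqrt (Z x u)))"
definition L2 :: "real \<Rightarrow> real" where "L2 x = integral {0..pi/2} (\<lambda>u. sin u ^ 8 / (Z x u ^ 2 * sqrt (Z x u)))"

lemma contI: "continuous_on ({1<..} \<times> {0..pi/2}) (\<lambda>p. Y (fst p) (snd p) * sqrt (Y (fst p) (snd p)))"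
  unfolding Y_def by (intro continuous_intros) (auto dest: Yne)
lemma contJ: "continuous_on ({1<..} \<times> {0..pi/2}) (\<lambda>p. 3 / fst p ^ 3 * (sin (snd p) ^ 2 * sqrt (Y (fst p) (snd p))))"
  unfolding Y_def by (intro continuous_intros) (auto dest: Yne)
lemma contK: "continuous_on ({1<..} \<times> {0..pi/2}) (\<lambda>p. 1 / fst p ^ 3 * (sin (snd p) ^ 4 / sqrt (Y (fst p) (snd p))))"
  unfolding Y_def by (intro continuous_intros) (auto dest: Yne)
lemma contG: "continuous_on ({1<..} \<times> {0..pi/2}) (\<lambda>p. sin (snd p) ^ 4 / sqrt (Z (fst p) (snd p)))"
  unfolding Z_def by (intro continuous_intros) (auto dest: Zne)
lemma contH: "continuous_on ({1<..} \<times> {0..pi/2}) (\<lambda>p. 1 / fst p ^ 3 * (sin (snd p) ^ 6 / (Z (fst p) (snd p) * sqrt (Z (fst p) (snd p)))))"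
  unfolding Z_def by (intro continuous_intros) (auto dest: Zne)
lemma contL: "continuous_on ({1<..} \<times> {0..pi/2}) (\<lambda>p. 3 / fst p ^ 3 * (sin (snd p) ^ 8 / (Z (fst p) (snd p) ^ 2 * sqrt (Z (fst p) (snd p)))))"
  unfolding Z_def by (intro continuous_intros) (auto dest: Zne)


lemma deriv_eq: "(f has_real_derivative a) F \<Longrightarrow> a = b \<Longrightarrow> (f has_real_derivative b) F"
  by simp

lemma sqrt_chain: assumes d: "(f has_real_derivative D) (at x)" and p: "f x > 0" shows
   "((\<lambda>x. sqrt (f x)) has_real_derivative D / (2 * sqrt (f x))) (at x)"
proof -
  have "((\<lambda>x. sqrt (f x)) has_real_derivative inverse (sqrt (f x)) / 2 * D) (at x)"
    by (rule DERIV_chain2[OF DERIV_real_sqrt[OF p] d])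
  then show ?thesis by (rule deriv_eq) (simp add: field_simps)
qed

lemma alg_dI: "Yv = q * q \<Longrightarrow> (q::real) > 0 \<Longrightarrow> x > 0 \<Longrightarrow>
  2 * S2 / x ^ 3 * q + 2 * S2 / x ^ 3 / (2 * q) * Yv = 3 / x ^ 3 * (S2 * q)"
  by (simp add: field_simps)
lemma alg_dJ: "(q::real) > 0 \<Longrightarrow> x > 0 \<Longrightarrow>
  0 * q + 2 * S2 / x ^ 3 / (2 * q) * S2 = 1 / x ^ 3 * (S2 * S2 / q)"
  by (simp add: field_simps)
lemma alg_dG: "Zv = q * q \<Longrightarrow> (q::real) > 0 \<Longrightarrow> x > 0 \<Longrightarrow>
  (0 * q - S4 * (- 2 * S2 / x ^ 3 / (2 * q))) / (q * q) = 1 / x ^ 3 * (S2 * S4 / (Zv * q))"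
  by (simp add: field_simps)
lemma s4': "sin u ^ 4 = sin u ^ 2 * sin u ^ 2"
  by (simp add: power_add[symmetric])
lemma s6': "sin u ^ 6 = sin u ^ 2 * sin u ^ 4"
  by (simp add: power_add[symmetric])

lemma dI_pt: assumes "x > 1"
  shows "((\<lambda>x. Y x u * sqrt (Y x u)) has_real_derivative 3 / x ^ 3 * (sin u ^ 2 * sqrt (Y x u))) (at x)"
proof -
  have y: "((\<lambda>x. Y x u) has_real_derivative 2 * sin u ^ 2 / x ^ 3) (at x)" using assms by (intro Y_deriv) auto
  have p: "Y x u > 0" using assms by (rule Y_pos)
  have sq: "sqrt (Y x u) * sqrt (Y x u) = Y x u" using p by simp
  have s: "((\<lambda>x. sqrt (Y x u)) has_real_derivative (2 * sin u ^ 2 / x ^ 3) / (2 * sqrt (Y x u))) (at x)"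
    by (rule sqrt_chain[OF y p])
  show ?thesis
    apply (rule deriv_eq[OF DERIV_mult[OF y s]])
    apply (rule alg_dI)
    using p assms by simp_all
qed

lemma dJ_pt: assumes "x > 1"
  shows "((\<lambda>x. sin u ^ 2 * sqrt (Y x u)) has_real_derivative 1 / x ^ 3 * (sin u ^ 4 / sqrt (Y x u))) (at x)"
proof -
  have y: "((\<lambda>x. Y x u) has_real_derivative 2 * sin u ^ 2 / x ^ 3) (at x)" using assms by (intro Y_deriv) auto
  have p: "Y x u > 0" using assms by (rule Y_pos)
  have s: "((\<lambda>x. sqrt (Y x u)) has_real_derivative (2 * sin u ^ 2 / x ^ 3) / (2 * sqrt (Y x u))) (at x)"
    by (rule sqrt_chain[OF y p])
  show ?thesis
    apply (rule deriv_eq[OF DERIV_mult[OF DERIV_const s]])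
    apply (subst s4')
    apply (rule alg_dJ)
    using p assms by simp_all
qed

lemma dG_pt: assumes "x > 1"
  shows "((\<lambda>x. sin u ^ 4 / sqrt (Z x u)) has_real_derivative 1 / x ^ 3 * (sin u ^ 6 / (Z x u * sqrt (Z x u)))) (at x)"
proof -
  have y: "((\<lambda>x. Z x u) has_real_derivative - 2 * sin u ^ 2 / x ^ 3) (at x)" using assms by (intro Z_deriv) auto
  have p: "Z x u > 0" using assms by (rule Z_pos)
  have sq: "sqrt (Z x u) * sqrt (Z x u) = Z x u" using p by simp
  have s: "((\<lambda>x. sqrt (Z x u)) has_real_derivative (- 2 * sin u ^ 2 / x ^ 3) / (2 * sqrt (Z x u))) (at x)"
    by (rule sqrt_chain[OF y p])
  show ?thesis
    apply (rule deriv_eq[OF DERIV_divide[OF DERIV_const s]])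
    prefer 2
    apply (subst s6')
    apply (rule alg_dG)
    using p assms by simp_all
qed

lemma s8': "sin u ^ 8 = sin u ^ 2 * sin u ^ 6"
  by (simp add: power_add[symmetric])

lemma alg_dH: "Zv = q * q \<Longrightarrow> (q::real) > 0 \<Longrightarrow> x > 0 \<Longrightarrow>
  (0 * (Zv * q) - S6 * (- 2 * S2 / x ^ 3 * q + - 2 * S2 / x ^ 3 / (2 * q) * Zv)) / (Zv * q * (Zv * q))
   = 3 / x ^ 3 * (S2 * S6 / (Zv ^ 2 * q))"
  by (simp add: field_simps power2_eq_square)

lemma dH_pt: assumes "x > 1"
  shows "((\<lambda>x. sin u ^ 6 / (Z x u * sqrt (Z x u))) has_real_derivative 3 / x ^ 3 * (sin u ^ 8 / (Z x u ^ 2 * sqrt (Z x u)))) (at x)"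
proof -
  have y: "((\<lambda>x. Z x u) has_real_derivative - 2 * sin u ^ 2 / x ^ 3) (at x)" using assms by (intro Z_deriv) auto
  have p: "Z x u > 0" using assms by (rule Z_pos)
  have sq: "sqrt (Z x u) * sqrt (Z x u) = Z x u" using p by simp
  have s: "((\<lambda>x. sqrt (Z x u)) has_real_derivative (- 2 * sin u ^ 2 / x ^ 3) / (2 * sqrt (Z x u))) (at x)"
    by (rule sqrt_chain[OF y p])
  show ?thesis
    apply (rule deriv_eq[OF DERIV_divide[OF DERIV_const DERIV_mult[OF y s]]])
    prefer 2
    apply (subst s8')
    apply (rule alg_dH)
    using p assms by simp_all
qed


lemma integral_cmul_real: "integral S (\<lambda>u. c * f u) = c * integral S (f :: 'a::euclidean_space \<Rightarrow> real)"
  using integral_cmul[of S c f] by simp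

lemma cont_slice:
  assumes c: "continuous_on ({1<..} \<times> {0..pi/2}) (\<lambda>p. F (fst p) (snd p))" and x: "(x::real) > 1"
  shows "continuous_on {0..pi/2} (F x)"
proof -
  have "continuous_on {0..pi/2} (\<lambda>u. F (fst (x, u)) (snd (x, u)))"
    by (rule continuous_on_compose2[OF c, of "{0..pi/2}" "\<lambda>u. (x, u)"]) (use x in \<open>auto intro!: continuous_intros\<close>)
  then show ?thesis by simp
qed

lemma contJ0: "continuous_on ({1<..} \<times> {0..pi/2}) (\<lambda>p. sin (snd p) ^ 2 * sqrt (Y (fst p) (snd p)))"
  unfolding Y_def by (intro continuous_intros) (auto dest: Yne)
lemma contK0: "continuous_on ({1<..} \<times> {0..pi/2}) (\<lambda>p. sin (snd p) ^ 4 / sqrt (Y (fst p) (snd p)))"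
  unfolding Y_def by (intro continuous_intros) (auto dest: Yne)
lemma contH0: "continuous_on ({1<..} \<times> {0..pi/2}) (\<lambda>p. sin (snd p) ^ 6 / (Z (fst p) (snd p) * sqrt (Z (fst p) (snd p))))"
  unfolding Z_def by (intro continuous_intros) (auto dest: Zne)
lemma contL0: "continuous_on ({1<..} \<times> {0..pi/2}) (\<lambda>p. sin (snd p) ^ 8 / (Z (fst p) (snd p) ^ 2 * sqrt (Z (fst p) (snd p))))"
  unfolding Z_def by (intro continuous_intros) (auto dest: Zne)

lemma intI: "x > 1 \<Longrightarrow> (\<lambda>u. Y x u * sqrt (Y x u)) integrable_on {0..pi/2}"
  using cont_slice[OF contI] integrable_continuous_interval by blast
lemma intJ: "x > 1 \<Longrightarrow> (\<lambda>u. sin u ^ 2 * sqrt (Y x u)) integrable_on {0..pi/2}"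
  using cont_slice[OF contJ0] integrable_continuous_interval by blast
lemma intK: "x > 1 \<Longrightarrow> (\<lambda>u. sin u ^ 4 / sqrt (Y x u)) integrable_on {0..pi/2}"
  using cont_slice[OF contK0] integrable_continuous_interval by blast
lemma intG: "x > 1 \<Longrightarrow> (\<lambda>u. sin u ^ 4 / sqrt (Z x u)) integrable_on {0..pi/2}"
  using cont_slice[OF contG] integrable_continuous_interval by blast
lemma intH: "x > 1 \<Longrightarrow> (\<lambda>u. sin u ^ 6 / (Z x u * sqrt (Z x u))) integrable_on {0..pi/2}"
  using cont_slice[OF contH0] integrable_continuous_interval by blast
lemma intL: "x > 1 \<Longrightarrow> (\<lambda>u. sin u ^ 8 / (Z x u ^ 2 * sqrt (Z x u))) integrable_on {0..pi/2}"
  using cont_slice[OF contL0] integrable_continuous_interval by blast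

lemma I1_deriv: assumes "x > 1" shows "(I1 has_real_derivative 3 / x ^ 3 * J1 x) (at x)"
proof -
  have "((\<lambda>x. integral {0..pi/2} (\<lambda>u. Y x u * sqrt (Y x u))) has_real_derivative
      integral {0..pi/2} (\<lambda>u. 3 / x ^ 3 * (sin u ^ 2 * sqrt (Y x u)))) (at x)"
    apply (rule leib[where Fx = "\<lambda>x u. 3 / x ^ 3 * (sin u ^ 2 * sqrt (Y x u))"])
    using dI_pt cont_slice[OF contI] contJ assms by auto
  then show ?thesis unfolding I1_def[abs_def] J1_def integral_cmul_real .
qed

lemma J1_deriv: assumes "x > 1" shows "(J1 has_real_derivative 1 / x ^ 3 * K1 x) (at x)"
proof -
  have "((\<lambda>x. integral {0..pi/2} (\<lambda>u. sin u ^ 2 * sqrt (Y x u))) has_real_derivative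
      integral {0..pi/2} (\<lambda>u. 1 / x ^ 3 * (sin u ^ 4 / sqrt (Y x u)))) (at x)"
    apply (rule leib[where Fx = "\<lambda>x u. 1 / x ^ 3 * (sin u ^ 4 / sqrt (Y x u))"])
    using dJ_pt cont_slice[OF contJ0] contK assms by auto
  then show ?thesis unfolding J1_def[abs_def] K1_def integral_cmul_real .
qed

lemma G_deriv: assumes "x > 1" shows "(G has_real_derivative 1 / x ^ 3 * H x) (at x)"
proof -
  have "((\<lambda>x. integral {0..pi/2} (\<lambda>u. sin u ^ 4 / sqrt (Z x u))) has_real_derivative
      integral {0..pi/2} (\<lambda>u. 1 / x ^ 3 * (sin u ^ 6 / (Z x u * sqrt (Z x u))))) (at x)"
    apply (rule leib[where Fx = "\<lambda>x u. 1 / x ^ 3 * (sin u ^ 6 / (Z x u * sqrt (Z x u)))"])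
    using dG_pt cont_slice[OF contG] contH assms by auto
  then show ?thesis unfolding G_def[abs_def] H_def integral_cmul_real .
qed

lemma H_deriv: assumes "x > 1" shows "(H has_real_derivative 3 / x ^ 3 * L2 x) (at x)"
proof -
  have "((\<lambda>x. integral {0..pi/2} (\<lambda>u. sin u ^ 6 / (Z x u * sqrt (Z x u)))) has_real_derivative
      integral {0..pi/2} (\<lambda>u. 3 / x ^ 3 * (sin u ^ 8 / (Z x u ^ 2 * sqrt (Z x u))))) (at x)"
    apply (rule leib[where Fx = "\<lambda>x u. 3 / x ^ 3 * (sin u ^ 8 / (Z x u ^ 2 * sqrt (Z x u)))"])
    using dH_pt cont_slice[OF contH0] contL assms by auto
  then show ?thesis unfolding H_def[abs_def] L2_def integral_cmul_real .
qed

lemma alg_ode1: assumes "Yv = q * q" "Yv = 1 - S^2 / x^2" "C * C = 1 - S * S" "(q::real) > 0" "x \<noteq> 0"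
  shows "(C * C + - S * S) * q + - 2 * S * C / x ^ 2 / (2 * q) * (S * C)
     = Yv * q - 2 * (S ^ 2 * q) + 1 / x ^ 2 * (1 - 1 / x ^ 2) * (S ^ 4 / q)"
proof -
  have e0: "S * C * (S * C) = S^2 * (C * C)" by (simp add: power2_eq_square mult_ac)
  have e: "S * C * (S * C) = S^2 * (1 - S * S)" using e0 assms(3) by simp
  have "(C * C + - S * S) * q + - 2 * S * C / x ^ 2 / (2 * q) * (S * C) = ((C * C - S * S) * (q * q) - S * C * (S * C) / x^2) / q"
    using assms(4,5) by (simp add: field_simps)
  also have "\<dots> = ((1 - 2 * S * S) * (1 - S^2/x^2) - S^2 * (1 - S * S) / x^2) / q"
    unfolding e assms(3) assms(1)[symmetric] assms(2) by simp
  also have "\<dots> = (Yv * Yv - 2 * S^2 * Yv + 1 / x ^ 2 * (1 - 1 / x ^ 2) * S ^ 4) / q"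
  proof -
    have "(1 - 2 * S * S) * (1 - S^2/x^2) - S^2 * (1 - S * S) / x^2 = Yv * Yv - 2 * S^2 * Yv + 1 / x ^ 2 * (1 - 1 / x ^ 2) * S ^ 4"
      using assms(5) unfolding assms(2) by (simp add: field_simps power2_eq_square power4_eq_xxxx)
    then show ?thesis by (metis (no_types) diff_diff_eq2 diff_add_eq)
  qed
  also have "\<dots> = Yv * q - 2 * (S ^ 2 * q) + 1 / x ^ 2 * (1 - 1 / x ^ 2) * (S ^ 4 / q)"
    using assms(1,4,5) by (simp add: field_simps)
  finally show ?thesis .
qed

lemma Yu_deriv: "x \<noteq> 0 \<Longrightarrow> ((\<lambda>u. Y x u) has_real_derivative - 2 * sin u * cos u / x ^ 2) (at u)"
  unfolding Y_def by (auto intro!: derivative_eq_intros simp: power2_eq_square)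

lemma Zu_deriv: "((\<lambda>u. Z x u) has_real_derivative - (2 * (1 - 1 / x ^ 2) * sin u * cos u)) (at u)"
  unfolding Z_def by (auto intro!: derivative_eq_intros simp: power2_eq_square)

lemma ode1_pt: assumes "x > 1"
  shows "((\<lambda>u. sin u * cos u * sqrt (Y x u)) has_real_derivative
     Y x u * sqrt (Y x u) - 2 * (sin u ^ 2 * sqrt (Y x u)) + 1 / x ^ 2 * (1 - 1 / x ^ 2) * (sin u ^ 4 / sqrt (Y x u))) (at u)"
proof -
  have p: "Y x u > 0" using assms by (rule Y_pos)
  have cc: "cos u * cos u = 1 - sin u * sin u" using sin_cos_squared_add[of u] by (simp add: power2_eq_square algebra_simps)
  have s: "((\<lambda>u. sqrt (Y x u)) has_real_derivative (- 2 * sin u * cos u / x ^ 2) / (2 * sqrt (Y x u))) (at u)"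
    by (rule sqrt_chain[OF Yu_deriv p]) (use assms in simp)
  show ?thesis
    apply (rule deriv_eq[OF DERIV_mult[OF DERIV_mult[OF DERIV_sin DERIV_cos] s]])
    apply (rule alg_ode1)
    using p assms cc by (simp_all add: Y_def)
qed

lemma ode1: assumes x: "x > 1" shows "I1 x - 2 * J1 x + 1 / x ^ 2 * (1 - 1 / x ^ 2) * K1 x = 0"
proof -
  have hI: "((\<lambda>u. Y x u * sqrt (Y x u)) has_integral I1 x) {0..pi/2}"
    unfolding I1_def using intI[OF x] by (rule integrable_integral)
  have hJ: "((\<lambda>u. sin u ^ 2 * sqrt (Y x u)) has_integral J1 x) {0..pi/2}"
    unfolding J1_def using intJ[OF x] by (rule integrable_integral)
  have hK: "((\<lambda>u. sin u ^ 4 / sqrt (Y x u)) has_integral K1 x) {0..pi/2}"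
    unfolding K1_def using intK[OF x] by (rule integrable_integral)
  have comb: "((\<lambda>u. Y x u * sqrt (Y x u) - 2 * (sin u ^ 2 * sqrt (Y x u)) + 1 / x ^ 2 * (1 - 1 / x ^ 2) * (sin u ^ 4 / sqrt (Y x u)))
      has_integral (I1 x - 2 * J1 x + 1 / x ^ 2 * (1 - 1 / x ^ 2) * K1 x)) {0..pi/2}"
    by (intro has_integral_add has_integral_diff has_integral_mult_right hI hJ hK)
  have ftc: "((\<lambda>u. Y x u * sqrt (Y x u) - 2 * (sin u ^ 2 * sqrt (Y x u)) + 1 / x ^ 2 * (1 - 1 / x ^ 2) * (sin u ^ 4 / sqrt (Y x u)))
      has_integral (sin (pi/2) * cos (pi/2) * sqrt (Y x (pi/2)) - sin 0 * cos 0 * sqrt (Y x 0))) {0..pi/2}"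
    apply (rule fundamental_theorem_of_calculus)
    subgoal by simp
    subgoal for u
      using ode1_pt[OF x, of u] unfolding has_real_derivative_iff_has_vector_derivative[symmetric] by (rule has_field_derivative_at_within)
    done
  have z: "sin (pi/2) * cos (pi/2) * sqrt (Y x (pi/2)) - sin 0 * cos 0 * sqrt (Y x 0) = 0" by simp
  show ?thesis using has_integral_unique[OF comb ftc] unfolding z .
qed

lemma alg_ode2: assumes "Zv = q * q" "q * q = 1 - m * S^2" "C * C = 1 - S * S" "(q::real) > 0" "Zu = - (2 * m * S * C)"
  shows "- (((5 * S^4 * C * C + - S * S^5) * (Zv * q) - S^5 * C * (Zu * q + Zu / (2 * q) * Zv)) / (Zv * q * (Zv * q)))
   = - 5 * (S^4 / q) + (6 - 8 * m) * (S^6 / (Zv * q)) + 3 * m * (1 - m) * (S^8 / (Zv^2 * q))"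
proof -
  have qn: "q \<noteq> 0" using assms(4) by simp
  have "- (((5 * S^4 * C * C + - S * S^5) * (Zv * q) - S^5 * C * (Zu * q + Zu / (2 * q) * Zv)) / (Zv * q * (Zv * q)))
     = - ((5 * S^4 * C * C + - S * S^5) * (q * q) + 3 * m * S^6 * (C * C)) / ((q * q) * (q * q) * q)"
    unfolding assms(1,5) using qn by (simp add: field_simps) (simp add: algebra_simps power2_eq_square power3_eq_cube eval_nat_numeral)
  also have "\<dots> = (- 5 * S^4 * (q * q) * (q * q) + (6 - 8 * m) * S^6 * (q * q) + 3 * m * (1 - m) * S^8) / ((q * q) * (q * q) * q)"
  proof -
    have "- ((5 * S^4 * C * C + - S * S^5) * (q * q) + 3 * m * S^6 * (C * C)) = (- 5 * S^4 * (q * q) * (q * q) + (6 - 8 * m) * S^6 * (q * q) + 3 * m * (1 - m) * S^8)"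
      using assms(2,3) by algebra
    then show ?thesis by simp
  qed
  also have "\<dots> = - 5 * (S^4 / q) + (6 - 8 * m) * (S^6 / (Zv * q)) + 3 * m * (1 - m) * (S^8 / (Zv^2 * q))"
    unfolding assms(1) using qn by (simp add: field_simps power2_eq_square)
  finally show ?thesis .
qed

lemma sin5_deriv: "((\<lambda>u. sin u ^ 5) has_real_derivative 5 * sin u ^ 4 * cos u) (at u)"
  by (auto intro!: derivative_eq_intros)

lemma ode2_pt: assumes "x > 1"
  shows "((\<lambda>u. - (sin u ^ 5 * cos u / (Z x u * sqrt (Z x u)))) has_real_derivative
     - 5 * (sin u ^ 4 / sqrt (Z x u)) + (6 - 8 * (1 - 1 / x ^ 2)) * (sin u ^ 6 / (Z x u * sqrt (Z x u)))
     + 3 * (1 - 1 / x ^ 2) * (1 - (1 - 1 / x ^ 2)) * (sin u ^ 8 / (Z x u ^ 2 * sqrt (Z x u)))) (at u)"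
proof -
  have p: "Z x u > 0" using assms by (rule Z_pos)
  have cc: "cos u * cos u = 1 - sin u * sin u" using sin_cos_squared_add[of u] by (simp add: power2_eq_square algebra_simps)
  have s: "((\<lambda>u. sqrt (Z x u)) has_real_derivative (- (2 * (1 - 1 / x ^ 2) * sin u * cos u)) / (2 * sqrt (Z x u))) (at u)"
    by (rule sqrt_chain[OF Zu_deriv p])
  show ?thesis
    apply (rule deriv_eq[OF DERIV_minus[OF DERIV_divide[OF DERIV_mult[OF sin5_deriv DERIV_cos] DERIV_mult[OF Zu_deriv s]]]])
    prefer 2
    apply (rule alg_ode2)
    using p assms cc by (simp_all add: Z_def)
qed

lemma ode2: assumes x: "x > 1"
  shows "- 5 * G x + (6 - 8 * (1 - 1 / x ^ 2)) * H x + 3 * (1 - 1 / x ^ 2) * (1 - (1 - 1 / x ^ 2)) * L2 x = 0"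
proof -
  have hG: "((\<lambda>u. sin u ^ 4 / sqrt (Z x u)) has_integral G x) {0..pi/2}"
    unfolding G_def using intG[OF x] by (rule integrable_integral)
  have hH: "((\<lambda>u. sin u ^ 6 / (Z x u * sqrt (Z x u))) has_integral H x) {0..pi/2}"
    unfolding H_def using intH[OF x] by (rule integrable_integral)
  have hL: "((\<lambda>u. sin u ^ 8 / (Z x u ^ 2 * sqrt (Z x u))) has_integral L2 x) {0..pi/2}"
    unfolding L2_def using intL[OF x] by (rule integrable_integral)
  have comb: "((\<lambda>u. - 5 * (sin u ^ 4 / sqrt (Z x u)) + (6 - 8 * (1 - 1 / x ^ 2)) * (sin u ^ 6 / (Z x u * sqrt (Z x u)))
     + 3 * (1 - 1 / x ^ 2) * (1 - (1 - 1 / x ^ 2)) * (sin u ^ 8 / (Z x u ^ 2 * sqrt (Z x u))))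
      has_integral (- 5 * G x + (6 - 8 * (1 - 1 / x ^ 2)) * H x + 3 * (1 - 1 / x ^ 2) * (1 - (1 - 1 / x ^ 2)) * L2 x)) {0..pi/2}"
    by (intro has_integral_add has_integral_mult_right hG hH hL)
  have ftc: "((\<lambda>u. - 5 * (sin u ^ 4 / sqrt (Z x u)) + (6 - 8 * (1 - 1 / x ^ 2)) * (sin u ^ 6 / (Z x u * sqrt (Z x u)))
     + 3 * (1 - 1 / x ^ 2) * (1 - (1 - 1 / x ^ 2)) * (sin u ^ 8 / (Z x u ^ 2 * sqrt (Z x u))))
      has_integral ((- (sin (pi/2) ^ 5 * cos (pi/2) / (Z x (pi/2) * sqrt (Z x (pi/2)))))
         - (- (sin 0 ^ 5 * cos 0 / (Z x 0 * sqrt (Z x 0)))))) {0..pi/2}"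
    apply (rule fundamental_theorem_of_calculus)
    subgoal by simp
    subgoal for u
      using ode2_pt[OF x, of u] unfolding has_real_derivative_iff_has_vector_derivative[symmetric] by (rule has_field_derivative_at_within)
    done
  have z: "(- (sin (pi/2) ^ 5 * cos (pi/2) / (Z x (pi/2) * sqrt (Z x (pi/2)))))
         - (- (sin 0 ^ 5 * cos 0 / (Z x 0 * sqrt (Z x 0)))) = 0" by simp
  show ?thesis using has_integral_unique[OF comb ftc] unfolding z .
qed


definition P1 :: "real \<Rightarrow> real" where "P1 x = 3 / 2 * I1 x"
definition P1d :: "real \<Rightarrow> real" where "P1d x = 9 / (2 * x ^ 3) * J1 x"
definition P1dd :: "real \<Rightarrow> real" where "P1dd x = 9 / 2 * (- 3 / x ^ 4 * J1 x + 1 / x ^ 6 * K1 x)"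
definition P2 :: "real \<Rightarrow> real" where "P2 x = 3 / 2 * (1 - 1 / x ^ 2) ^ 2 * G x"
definition P2d :: "real \<Rightarrow> real" where
  "P2d x = 3 / (2 * x ^ 3) * (4 * (1 - 1 / x ^ 2) * G x + (1 - 1 / x ^ 2) ^ 2 * H x)"
definition P2dd :: "real \<Rightarrow> real" where
  "P2dd x = 3 / 2 * (- 3 / x ^ 4 * (4 * (1 - 1 / x ^ 2) * G x + (1 - 1 / x ^ 2) ^ 2 * H x)
      + 1 / x ^ 6 * (8 * G x + 8 * (1 - 1 / x ^ 2) * H x + 3 * (1 - 1 / x ^ 2) ^ 2 * L2 x))"

lemma m_deriv: "x \<noteq> 0 \<Longrightarrow> ((\<lambda>x. 1 - 1 / x ^ 2) has_real_derivative 2 / x ^ 3) (at x)"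
  by (auto intro!: derivative_eq_intros simp: field_simps power2_eq_square power3_eq_cube)

lemma m2_deriv: "x \<noteq> 0 \<Longrightarrow> ((\<lambda>x. 3 / 2 * (1 - 1 / x ^ 2) ^ 2) has_real_derivative 3 / 2 * (2 * (1 - 1 / x ^ 2) * (2 / x ^ 3))) (at x)"
  by (rule deriv_eq[OF DERIV_cmult[OF DERIV_power[OF m_deriv]]]) (auto simp: field_simps)

lemma inv3_deriv: "x \<noteq> 0 \<Longrightarrow> ((\<lambda>x. c / (2 * x ^ 3)) has_real_derivative - 3 * c / (2 * x ^ 4)) (at x)"
  by (auto intro!: derivative_eq_intros simp: field_simps eval_nat_numeral)

lemma P1_deriv: "x > 1 \<Longrightarrow> (P1 has_real_derivative P1d x) (at x)"
  unfolding P1_def[abs_def] P1d_def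
  by (rule deriv_eq[OF DERIV_cmult[OF I1_deriv]]) (auto simp: field_simps)

lemma P1d_deriv: "x > 1 \<Longrightarrow> (P1d has_real_derivative P1dd x) (at x)"
  unfolding P1d_def[abs_def] P1dd_def
  by (rule deriv_eq[OF DERIV_mult[OF inv3_deriv J1_deriv]]) (auto simp: field_simps eval_nat_numeral)

lemma P2_deriv: "x > 1 \<Longrightarrow> (P2 has_real_derivative P2d x) (at x)"
  unfolding P2_def[abs_def] P2d_def
  by (rule deriv_eq[OF DERIV_mult[OF m2_deriv G_deriv]]) (auto simp: field_simps eval_nat_numeral)

lemma Q_deriv: "x > 1 \<Longrightarrow> ((\<lambda>x. 4 * (1 - 1 / x ^ 2) * G x + (1 - 1 / x ^ 2) ^ 2 * H x) has_real_derivative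
   (8 * G x + 8 * (1 - 1 / x ^ 2) * H x + 3 * (1 - 1 / x ^ 2) ^ 2 * L2 x) / x ^ 3) (at x)"
  by (rule deriv_eq[OF DERIV_add[OF DERIV_mult[OF DERIV_cmult[OF m_deriv] G_deriv] DERIV_mult[OF DERIV_power[OF m_deriv] H_deriv]]])
     (auto simp: field_simps eval_nat_numeral)

lemma P2d_deriv: "x > 1 \<Longrightarrow> (P2d has_real_derivative P2dd x) (at x)"
  unfolding P2d_def[abs_def] P2dd_def
  by (rule deriv_eq[OF DERIV_mult[OF inv3_deriv Q_deriv]]) (auto simp: field_simps eval_nat_numeral)

lemma P1_ode: assumes "x > 1" shows "x^2 * (x^2 - 1) * P1dd x + x * (x^2 - 3) * P1d x + 3 * P1 x = 0"
proof -
  have "x^2 * (x^2 - 1) * P1dd x + x * (x^2 - 3) * P1d x + 3 * P1 x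
     = 9 / 2 * (I1 x - 2 * J1 x + 1 / x ^ 2 * (1 - 1 / x ^ 2) * K1 x)"
    using assms unfolding P1_def P1d_def P1dd_def by (simp add: field_simps eval_nat_numeral)
  then show ?thesis using ode1[OF assms] by simp
qed

lemma P2_ode: assumes "x > 1" shows "x^2 * (x^2 - 1) * P2dd x + x * (x^2 - 3) * P2d x + 3 * P2 x = 0"
proof -
  have "x^2 * (x^2 - 1) * P2dd x + x * (x^2 - 3) * P2d x + 3 * P2 x
     = 3 / 2 * (1 - 1 / x ^ 2) ^ 2 * (- 5 * G x + (6 - 8 * (1 - 1 / x ^ 2)) * H x + 3 * (1 - 1 / x ^ 2) * (1 - (1 - 1 / x ^ 2)) * L2 x)"
    using assms unfolding P2_def P2d_def P2dd_def by (simp add: field_simps eval_nat_numeral)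
  then show ?thesis using ode2[OF assms] by simp
qed



lemma sc1: assumes "0 \<le> (y::real)" "y \<le> 1" shows "(3 * y ^ 2 - y ^ 3) / 2 \<le> y * sqrt y"
proof -
  have "(y * (3 - y) / 2) ^ 2 \<le> y"
  proof -
    have "y - (y * (3 - y) / 2) ^ 2 = y * (1 - y) ^ 2 * (4 - y) / 4" by algebra
    moreover have "0 \<le> y * (1 - y) ^ 2 * (4 - y) / 4" using assms by simp
    ultimately show ?thesis by linarith
  qed
  then have "y * (3 - y) / 2 \<le> sqrt y" by (rule real_le_rsqrt)
  then have "y * (y * (3 - y) / 2) \<le> y * sqrt y" using assms(1) by (rule mult_left_mono)
  moreover have "(3 * y ^ 2 - y ^ 3) / 2 = y * (y * (3 - y) / 2)" by algebra
  ultimately show ?thesis by simp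
qed




lemma sqrt_ge1: assumes "1 \<le> (a::real)" shows "1 \<le> sqrt a"
  using assms real_sqrt_le_mono[of 1 a] by simp

lemma sc2: assumes "0 \<le> (w::real)" "w \<le> 2/3" shows "1 / sqrt (1 - w) \<le> 1 + w / 2 + w ^ 2"
proof -
  define p where "p = 2 + w + 2 * w ^ 2"
  have pp: "p > 0" unfolding p_def using assms by (simp add: add_pos_nonneg)
  have w3: "w ^ 3 \<le> (2/3) ^ 3" using assms by (intro power_mono) auto
  have c: "(2/3::real) ^ 3 = 8 / 27" by (simp add: power3_eq_cube)
  have w3': "4 * w ^ 3 \<le> 32 / 27" using w3 unfolding c by linarith
  have "p ^ 2 * (1 - w) - 4 = w ^ 2 * (5 - 5 * w - 4 * w ^ 3)" unfolding p_def by algebra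
  moreover have "0 \<le> 5 - 5 * w - 4 * w ^ 3" using assms w3' by linarith
  then have "0 \<le> w ^ 2 * (5 - 5 * w - 4 * w ^ 3)" by simp
  ultimately have "4 \<le> p ^ 2 * (1 - w)" by linarith
  then have "1 \<le> (p / 2) ^ 2 * (1 - w)" by (simp add: power_divide)
  then have "1 \<le> sqrt ((p / 2) ^ 2 * (1 - w))" by (rule sqrt_ge1)
  also have "\<dots> = p / 2 * sqrt (1 - w)" using pp by (simp add: real_sqrt_mult)
  finally have "1 \<le> p / 2 * sqrt (1 - w)" .
  moreover have "sqrt (1 - w) > 0" using assms by simp
  moreover have "p / 2 = 1 + w / 2 + w ^ 2" unfolding p_def by simp
  ultimately show ?thesis by (simp add: divide_le_eq)
qed

lemma sc3: assumes "0 \<le> (w::real)" "w \<le> 2/3" shows "1 / ((1 - w) * sqrt (1 - w)) \<le> 1 + 3 * w / 2 + 8 * w ^ 2"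
proof -
  define p where "p = 2 + 3 * w + 16 * w ^ 2"
  have pp: "p > 0" unfolding p_def using assms by (simp add: add_pos_nonneg)
  define v where "v = 2 - 3 * w"
  have l: "0 \<le> v" using assms unfolding v_def by simp
  have "23328 * (p ^ 2 * (1 - w) ^ 3 - 4) = w ^ 2 * (35721 * v ^ 5 + 403137 * w * v ^ 4 + 2133054 * w ^ 2 * v ^ 3 + 3847662 * w ^ 3 * v ^ 2 + 2403513 * w ^ 4 * v + 228177 * w ^ 5)"
    unfolding p_def v_def by algebra
  moreover have "0 \<le> w ^ 2 * (35721 * v ^ 5 + 403137 * w * v ^ 4 + 2133054 * w ^ 2 * v ^ 3 + 3847662 * w ^ 3 * v ^ 2 + 2403513 * w ^ 4 * v + 228177 * w ^ 5)"
    using assms l by (intro add_nonneg_nonneg mult_nonneg_nonneg zero_le_power) simp_all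
  ultimately have "0 \<le> 23328 * (p ^ 2 * (1 - w) ^ 3 - 4)" by simp
  then have "4 \<le> p ^ 2 * (1 - w) ^ 3" by simp
  then have "1 \<le> (p / 2) ^ 2 * (1 - w) ^ 3" by (simp add: power_divide)
  then have "1 \<le> sqrt ((p / 2) ^ 2 * (1 - w) ^ 3)" by (rule sqrt_ge1)
  also have "\<dots> = p / 2 * ((1 - w) * sqrt (1 - w))"
  proof -
    have "(1 - w) ^ 3 = ((1 - w) ^ 2) * (1 - w)" by algebra
    then show ?thesis using pp assms by (simp add: real_sqrt_mult)
  qed
  finally have "1 \<le> p / 2 * ((1 - w) * sqrt (1 - w))" .
  moreover have "(1 - w) * sqrt (1 - w) > 0" using assms by simp
  moreover have "p / 2 = 1 + 3 * w / 2 + 8 * w ^ 2" unfolding p_def by simp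
  ultimately show ?thesis by (simp add: divide_le_eq)
qed



lemma sc4: assumes "0 < (z::real)" "z \<le> 1" shows "1 \<le> 1 / sqrt z" "1 \<le> 1 / (z * sqrt z)"
proof -
  have s: "0 < sqrt z" "sqrt z \<le> 1" using assms by auto
  show "1 \<le> 1 / sqrt z" using s by (simp add: le_divide_eq)
  have "z * sqrt z \<le> 1" using assms s by (simp add: mult_le_one)
  then show "1 \<le> 1 / (z * sqrt z)" using assms s by (simp add: le_divide_eq)
qed



lemma Ppos: assumes "0 < m" "m \<le> (2/3::real)"
  shows "3 * ((1 - 3 * (1 - m) / 4 + 5 * (1 - m) ^ 3 / 32) ^ 2 + m ^ 4 * (3 / 8) ^ 2)
   - m * (1 - m) * (9 * (1 / 2) ^ 2 + (4 * m * (3 / 8 + 5 * m / 32 + 35 * m ^ 2 / 128) + m ^ 2 * (5 / 16 + 105 * m / 256 + 63 * m ^ 2 / 32)) ^ 2) > 0"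
proof -
  have e: "3 * ((1 - 3 * (1 - m) / 4 + 5 * (1 - m) ^ 3 / 32) ^ 2 + m ^ 4 * (3 / 8) ^ 2)
   - m * (1 - m) * (9 * (1 / 2) ^ 2 + (4 * m * (3 / 8 + 5 * m / 32 + 35 * m ^ 2 / 128) + m ^ 2 * (5 / 16 + 105 * m / 256 + 63 * m ^ 2 / 32)) ^ 2)
   = (29937843/1048576) * m ^ 0 * ((2/3) - m) ^ 10 + (118157049/524288) * m ^ 1 * ((2/3) - m) ^ 9 + (877172895/1048576) * m ^ 2 * ((2/3) - m) ^ 8 + (258706791/131072) * m ^ 3 * ((2/3) - m) ^ 7 + (1746610371/524288) * m ^ 4 * ((2/3) - m) ^ 6 + (1090749483/262144) * m ^ 5 * ((2/3) - m) ^ 5 + (1961894763/524288) * m ^ 6 * ((2/3) - m) ^ 4 + (1182672225/524288) * m ^ 7 * ((2/3) - m) ^ 3 + (847043145/1048576) * m ^ 8 * ((2/3) - m) ^ 2 + (17889723/131072) * m ^ 9 * ((2/3) - m) ^ 1 + (10328697/1048576) * m ^ 10 * ((2/3) - m) ^ 0"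
    by algebra
  have l: "0 \<le> (2/3) - m" using assms by simp
  have "0 < (10328697/1048576) * m ^ 10 * ((2/3) - m) ^ 0" using assms by simp
  moreover have "0 \<le> (29937843/1048576) * m ^ 0 * ((2/3) - m) ^ 10 + (118157049/524288) * m ^ 1 * ((2/3) - m) ^ 9 + (877172895/1048576) * m ^ 2 * ((2/3) - m) ^ 8 + (258706791/131072) * m ^ 3 * ((2/3) - m) ^ 7 + (1746610371/524288) * m ^ 4 * ((2/3) - m) ^ 6 + (1090749483/262144) * m ^ 5 * ((2/3) - m) ^ 5 + (1961894763/524288) * m ^ 6 * ((2/3) - m) ^ 4 + (1182672225/524288) * m ^ 7 * ((2/3) - m) ^ 3 + (847043145/1048576) * m ^ 8 * ((2/3) - m) ^ 2 + (17889723/131072) * m ^ 9 * ((2/3) - m) ^ 1"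
    using assms l by (intro add_nonneg_nonneg mult_nonneg_nonneg zero_le_power) simp_all
  ultimately show ?thesis unfolding e by linarith
qed




lemma alg_w: "(c::real) ^ 2 = 1 - s ^ 2 \<Longrightarrow> - ((r + 1) * (c * S) * c + - s * (s * S)) = (r + 2) * (s ^ 2 * S) - (r + 1) * S"
  by algebra

lemma wstep: assumes A: "((\<lambda>u. sin u ^ n) has_integral A) {0..pi/2}"
  shows "((\<lambda>u. sin u ^ (n + 2)) has_integral ((real n + 1) / (real n + 2) * A)) {0..pi/2}"
proof -
  have d: "((\<lambda>u. - (sin u ^ (n + 1) * cos u)) has_real_derivative
      ((real n + 2) * sin u ^ (n + 2) - (real n + 1) * sin u ^ n)) (at u)" for u
  proof (rule deriv_eq[OF DERIV_minus[OF DERIV_mult[OF DERIV_power[OF DERIV_sin] DERIV_cos]]])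
    have e1: "sin u ^ (n + 1) = sin u * sin u ^ n" by simp
    have e2: "sin u ^ (n + 2) = sin u ^ 2 * sin u ^ n" by (metis power_add mult.commute)
    have e3: "cos u ^ 2 = 1 - sin u ^ 2" by (simp add: cos_squared_eq)
    show "- (of_nat (n + 1) * (cos u * sin u ^ (n + 1 - Suc 0)) * cos u + - sin u * sin u ^ (n + 1)) =
      (real n + 2) * sin u ^ (n + 2) - (real n + 1) * sin u ^ n"
    proof -
      have e4: "n + 1 - Suc 0 = n" by simp
      have e5: "(of_nat (n + 1) :: real) = real n + 1" by simp
      show ?thesis unfolding e1 e2 e4 e5 using alg_w[OF e3] .
    qed
  qed
  have ftc: "((\<lambda>u. (real n + 2) * sin u ^ (n + 2) - (real n + 1) * sin u ^ n) has_integral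
      ((- (sin (pi/2) ^ (n + 1) * cos (pi/2))) - (- (sin 0 ^ (n + 1) * cos 0)))) {0..pi/2}"
    apply (rule fundamental_theorem_of_calculus)
    subgoal by simp
    subgoal for u using d[of u] unfolding has_real_derivative_iff_has_vector_derivative[symmetric]
      by (rule has_field_derivative_at_within)
    done
  then have ftc0: "((\<lambda>u. (real n + 2) * sin u ^ (n + 2) - (real n + 1) * sin u ^ n) has_integral 0) {0..pi/2}"
    by simp
  have "((\<lambda>u. 1 / (real n + 2) * (((real n + 2) * sin u ^ (n + 2) - (real n + 1) * sin u ^ n) + (real n + 1) * sin u ^ n))
     has_integral (1 / (real n + 2) * (0 + (real n + 1) * A))) {0..pi/2}"
    by (intro has_integral_mult_right has_integral_add ftc0 A)
  moreover have "(\<lambda>u. 1 / (real n + 2) * (((real n + 2) * sin u ^ (n + 2) - (real n + 1) * sin u ^ n) + (real n + 1) * sin u ^ n))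
     = (\<lambda>u. sin u ^ (n + 2))"
    by (rule ext) (simp add: field_simps)
  moreover have "1 / (real n + 2) * (0 + (real n + 1) * A) = (real n + 1) / (real n + 2) * A" by simp
  ultimately show ?thesis by simp
qed

lemma w0: "((\<lambda>u. sin u ^ 0) has_integral pi / 2) {0..pi/2}"
  using has_integral_const_real[of "1::real" 0 "pi/2"] by (simp add: real_scaleR_def)
lemma wstep': "((\<lambda>u. sin u ^ n) has_integral A) {0..pi/2} \<Longrightarrow> k = n + 2 \<Longrightarrow> c = (real n + 1) / (real n + 2) * A
  \<Longrightarrow> ((\<lambda>u. sin u ^ k) has_integral c) {0..pi/2}"
  using wstep by blast

lemma w2: "((\<lambda>u. sin u ^ 2) has_integral pi / 4) {0..pi/2}"
  by (rule wstep'[OF w0]) simp_all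
lemma w4: "((\<lambda>u. sin u ^ 4) has_integral 3 * pi / 16) {0..pi/2}"
  by (rule wstep'[OF w2]) simp_all
lemma w6: "((\<lambda>u. sin u ^ 6) has_integral 5 * pi / 32) {0..pi/2}"
  by (rule wstep'[OF w4]) simp_all
lemma w8: "((\<lambda>u. sin u ^ 8) has_integral 35 * pi / 256) {0..pi/2}"
  by (rule wstep'[OF w6]) simp_all
lemma w10: "((\<lambda>u. sin u ^ 10) has_integral 63 * pi / 512) {0..pi/2}"
  by (rule wstep'[OF w8]) simp_all

lemma poly_int: "((\<lambda>u. a0 + a1 * sin u ^ 2 + a2 * sin u ^ 4 + a3 * sin u ^ 6 + a4 * sin u ^ 8 + a5 * sin u ^ 10) has_integral
   (pi / 2 * (a0 + a1 / 2 + 3 * a2 / 8 + 5 * a3 / 16 + 35 * a4 / 128 + 63 * a5 / 256))) {0..pi/2}"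
proof -
  have "((\<lambda>u. a0 * sin u ^ 0 + a1 * sin u ^ 2 + a2 * sin u ^ 4 + a3 * sin u ^ 6 + a4 * sin u ^ 8 + a5 * sin u ^ 10) has_integral
   (a0 * (pi / 2) + a1 * (pi / 4) + a2 * (3 * pi / 16) + a3 * (5 * pi / 32) + a4 * (35 * pi / 256) + a5 * (63 * pi / 512))) {0..pi/2}"
    by (intro has_integral_add has_integral_mult_right w0 w2 w4 w6 w8 w10)
  then show ?thesis by (simp add: field_simps)
qed


lemma mfacts: assumes "(x::real) > 1" shows "0 < 1 - 1 / x ^ 2" "1 - 1 / x ^ 2 < 1" "0 < 1 / x ^ 2" "1 / x ^ 2 \<le> 1"
proof -
  have x2: "x^2 > 1" using assms by (simp add: one_less_power)
  show "0 < 1 - 1/x^2" "1 - 1/x^2 < 1" "0 < 1 / x ^ 2" using x2 assms by (auto simp: divide_less_eq)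
  show "1 / x ^ 2 \<le> 1" using x2 by (simp add: divide_le_eq)
qed

lemma BI1: assumes x: "x > 1" shows "pi / 2 * (1 - 3 / 4 * (1 / x ^ 2) + 5 / 32 * (1 / x ^ 2) ^ 3) \<le> I1 x"
proof -
  define b where "b = 1 / x ^ 2"
  have hI: "((\<lambda>u. Y x u * sqrt (Y x u)) has_integral I1 x) {0..pi/2}"
    unfolding I1_def using intI[OF x] by (rule integrable_integral)
  have hp: "((\<lambda>u. 1 + (- 3 / 2 * b) * sin u ^ 2 + 0 * sin u ^ 4 + (b ^ 3 / 2) * sin u ^ 6 + 0 * sin u ^ 8 + 0 * sin u ^ 10) has_integral
     (pi / 2 * (1 + (- 3 / 2 * b) / 2 + 3 * 0 / 8 + 5 * (b ^ 3 / 2) / 16 + 35 * 0 / 128 + 63 * 0 / 256))) {0..pi/2}"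
    by (rule poly_int)
  have "pi / 2 * (1 + (- 3 / 2 * b) / 2 + 3 * 0 / 8 + 5 * (b ^ 3 / 2) / 16 + 35 * 0 / 128 + 63 * 0 / 256) \<le> I1 x"
  proof (rule has_integral_le[OF hp hI])
    fix u assume "u \<in> {0..pi/2}"
    have y: "Y x u = 1 - b * sin u ^ 2" unfolding Y_def b_def by simp
    have "(3 * Y x u ^ 2 - Y x u ^ 3) / 2 \<le> Y x u * sqrt (Y x u)"
      using Y_pos[OF x, of u] Y_le1[OF x, of u] by (intro sc1) auto
    moreover have "(3 * Y x u ^ 2 - Y x u ^ 3) / 2 = 1 + (- 3 / 2 * b) * sin u ^ 2 + 0 * sin u ^ 4 + (b ^ 3 / 2) * sin u ^ 6 + 0 * sin u ^ 8 + 0 * sin u ^ 10"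
      unfolding y by algebra
    ultimately show "1 + (- 3 / 2 * b) * sin u ^ 2 + 0 * sin u ^ 4 + (b ^ 3 / 2) * sin u ^ 6 + 0 * sin u ^ 8 + 0 * sin u ^ 10 \<le> Y x u * sqrt (Y x u)"
      by simp
  qed
  then show ?thesis unfolding b_def by (simp add: algebra_simps)
qed

lemma BJ1: assumes x: "x > 1" shows "J1 x \<le> pi / 4" "0 \<le> J1 x"
proof -
  have hJ: "((\<lambda>u. sin u ^ 2 * sqrt (Y x u)) has_integral J1 x) {0..pi/2}"
    unfolding J1_def using intJ[OF x] by (rule integrable_integral)
  show "J1 x \<le> pi / 4"
  proof (rule has_integral_le[OF hJ w2])
    fix u assume "u \<in> {0..pi/2}"
    have "sqrt (Y x u) \<le> 1" using Y_le1[OF x, of u] by simp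
    then show "sin u ^ 2 * sqrt (Y x u) \<le> sin u ^ 2" using mult_left_mono[of "sqrt (Y x u)" 1 "sin u ^ 2"] by simp
  qed
  show "0 \<le> J1 x"
    by (rule has_integral_le[OF has_integral_0 hJ]) (metis Y_pos[OF x] less_imp_le real_sqrt_ge_zero zero_le_power2 mult_nonneg_nonneg)
qed

lemma Z_le1: assumes "x > 1" shows "Z x u \<le> 1"
proof -
  have "0 \<le> (1 - 1 / x ^ 2) * sin u ^ 2" using mfacts[OF assms] by (intro mult_nonneg_nonneg) auto
  then show ?thesis unfolding Z_def by simp
qed

lemma BG: assumes x: "x > 1" shows "3 * pi / 16 \<le> G x"
proof -
  have hG: "((\<lambda>u. sin u ^ 4 / sqrt (Z x u)) has_integral G x) {0..pi/2}"
    unfolding G_def using intG[OF x] by (rule integrable_integral)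
  show ?thesis
  proof (rule has_integral_le[OF w4 hG])
    fix u assume "u \<in> {0..pi/2}"
    have "1 \<le> 1 / sqrt (Z x u)" by (rule sc4(1)[OF Z_pos[OF x] Z_le1[OF x]])
    then have "sin u ^ 4 * 1 \<le> sin u ^ 4 * (1 / sqrt (Z x u))" by (intro mult_left_mono) simp_all
    then show "sin u ^ 4 \<le> sin u ^ 4 / sqrt (Z x u)" by simp
  qed
qed

lemma BH: assumes x: "x > 1" shows "5 * pi / 32 \<le> H x"
proof -
  have hH: "((\<lambda>u. sin u ^ 6 / (Z x u * sqrt (Z x u))) has_integral H x) {0..pi/2}"
    unfolding H_def using intH[OF x] by (rule integrable_integral)
  show ?thesis
  proof (rule has_integral_le[OF w6 hH])
    fix u assume "u \<in> {0..pi/2}"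
    have "1 \<le> 1 / (Z x u * sqrt (Z x u))" by (rule sc4(2)[OF Z_pos[OF x] Z_le1[OF x]])
    then have "sin u ^ 6 * 1 \<le> sin u ^ 6 * (1 / (Z x u * sqrt (Z x u)))" by (intro mult_left_mono) simp_all
    then show "sin u ^ 6 \<le> sin u ^ 6 / (Z x u * sqrt (Z x u))" by simp
  qed
qed

lemma w_range: assumes x: "(x::real) > 1" and m: "1 - 1 / x ^ 2 \<le> 2 / 3"
  shows "0 \<le> (1 - 1 / x ^ 2) * sin u ^ 2" "(1 - 1 / x ^ 2) * sin u ^ 2 \<le> 2 / 3"
proof -
  have m0: "0 \<le> 1 - 1 / x ^ 2" using mfacts[OF x] by simp
  show "0 \<le> (1 - 1 / x ^ 2) * sin u ^ 2" using m0 by simp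
  have "(1 - 1 / x ^ 2) * sin u ^ 2 \<le> (1 - 1 / x ^ 2)" using mult_left_mono[OF sin2_le[of u] m0] by simp
  then show "(1 - 1 / x ^ 2) * sin u ^ 2 \<le> 2 / 3" using m by linarith
qed

lemma BGu: assumes x: "x > 1" and m: "1 - 1 / x ^ 2 \<le> 2 / 3"
  shows "G x \<le> pi / 2 * (3 / 8 + 5 * (1 - 1 / x ^ 2) / 32 + 35 * (1 - 1 / x ^ 2) ^ 2 / 128)"
proof -
  define mm where "mm = 1 - 1 / x ^ 2"
  have hG: "((\<lambda>u. sin u ^ 4 / sqrt (Z x u)) has_integral G x) {0..pi/2}"
    unfolding G_def using intG[OF x] by (rule integrable_integral)
  have hp: "((\<lambda>u. 0 + 0 * sin u ^ 2 + 1 * sin u ^ 4 + (mm / 2) * sin u ^ 6 + mm ^ 2 * sin u ^ 8 + 0 * sin u ^ 10) has_integral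
     (pi / 2 * (0 + 0 / 2 + 3 * 1 / 8 + 5 * (mm / 2) / 16 + 35 * mm ^ 2 / 128 + 63 * 0 / 256))) {0..pi/2}"
    by (rule poly_int)
  have "G x \<le> pi / 2 * (0 + 0 / 2 + 3 * 1 / 8 + 5 * (mm / 2) / 16 + 35 * mm ^ 2 / 128 + 63 * 0 / 256)"
  proof (rule has_integral_le[OF hG hp])
    fix u assume "u \<in> {0..pi/2}"
    have z: "Z x u = 1 - mm * sin u ^ 2" unfolding Z_def mm_def by simp
    have "1 / sqrt (Z x u) \<le> 1 + mm * sin u ^ 2 / 2 + (mm * sin u ^ 2) ^ 2"
      unfolding z using w_range[OF x m, of u] unfolding mm_def[symmetric] by (rule sc2)
    then have "sin u ^ 4 * (1 / sqrt (Z x u)) \<le> sin u ^ 4 * (1 + mm * sin u ^ 2 / 2 + (mm * sin u ^ 2) ^ 2)"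
      by (intro mult_left_mono) simp_all
    moreover have "sin u ^ 4 * (1 + mm * sin u ^ 2 / 2 + (mm * sin u ^ 2) ^ 2) = 0 + 0 * sin u ^ 2 + 1 * sin u ^ 4 + (mm / 2) * sin u ^ 6 + mm ^ 2 * sin u ^ 8 + 0 * sin u ^ 10"
      by algebra
    ultimately show "sin u ^ 4 / sqrt (Z x u) \<le> 0 + 0 * sin u ^ 2 + 1 * sin u ^ 4 + (mm / 2) * sin u ^ 6 + mm ^ 2 * sin u ^ 8 + 0 * sin u ^ 10"
      by simp
  qed
  then show ?thesis unfolding mm_def by simp
qed

lemma BHu: assumes x: "x > 1" and m: "1 - 1 / x ^ 2 \<le> 2 / 3"
  shows "H x \<le> pi / 2 * (5 / 16 + 105 * (1 - 1 / x ^ 2) / 256 + 63 * (1 - 1 / x ^ 2) ^ 2 / 32)"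
proof -
  define mm where "mm = 1 - 1 / x ^ 2"
  have hH: "((\<lambda>u. sin u ^ 6 / (Z x u * sqrt (Z x u))) has_integral H x) {0..pi/2}"
    unfolding H_def using intH[OF x] by (rule integrable_integral)
  have hp: "((\<lambda>u. 0 + 0 * sin u ^ 2 + 0 * sin u ^ 4 + 1 * sin u ^ 6 + (3 * mm / 2) * sin u ^ 8 + (8 * mm ^ 2) * sin u ^ 10) has_integral
     (pi / 2 * (0 + 0 / 2 + 3 * 0 / 8 + 5 * 1 / 16 + 35 * (3 * mm / 2) / 128 + 63 * (8 * mm ^ 2) / 256))) {0..pi/2}"
    by (rule poly_int)
  have "H x \<le> pi / 2 * (0 + 0 / 2 + 3 * 0 / 8 + 5 * 1 / 16 + 35 * (3 * mm / 2) / 128 + 63 * (8 * mm ^ 2) / 256)"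
  proof (rule has_integral_le[OF hH hp])
    fix u assume "u \<in> {0..pi/2}"
    have z: "Z x u = 1 - mm * sin u ^ 2" unfolding Z_def mm_def by simp
    have "1 / (Z x u * sqrt (Z x u)) \<le> 1 + 3 * (mm * sin u ^ 2) / 2 + 8 * (mm * sin u ^ 2) ^ 2"
      unfolding z using w_range[OF x m, of u] unfolding mm_def[symmetric] by (rule sc3)
    then have "sin u ^ 6 * (1 / (Z x u * sqrt (Z x u))) \<le> sin u ^ 6 * (1 + 3 * (mm * sin u ^ 2) / 2 + 8 * (mm * sin u ^ 2) ^ 2)"
      by (intro mult_left_mono) simp_all
    moreover have "sin u ^ 6 * (1 + 3 * (mm * sin u ^ 2) / 2 + 8 * (mm * sin u ^ 2) ^ 2) = 0 + 0 * sin u ^ 2 + 0 * sin u ^ 4 + 1 * sin u ^ 6 + (3 * mm / 2) * sin u ^ 8 + (8 * mm ^ 2) * sin u ^ 10"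
      by algebra
    ultimately show "sin u ^ 6 / (Z x u * sqrt (Z x u)) \<le> 0 + 0 * sin u ^ 2 + 0 * sin u ^ 4 + 1 * sin u ^ 6 + (3 * mm / 2) * sin u ^ 8 + (8 * mm ^ 2) * sin u ^ 10"
      by simp
  qed
  then show ?thesis unfolding mm_def by simp
qed

lemma BA: assumes x: "x > 1" shows "3 * (1 - 1 / x ^ 2) * J1 x \<le> 4 * I1 x"
proof -
  have hI: "((\<lambda>u. Y x u * sqrt (Y x u)) has_integral I1 x) {0..pi/2}"
    unfolding I1_def using intI[OF x] by (rule integrable_integral)
  have hJ: "((\<lambda>u. sin u ^ 2 * sqrt (Y x u)) has_integral J1 x) {0..pi/2}"
    unfolding J1_def using intJ[OF x] by (rule integrable_integral)
  show ?thesis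
  proof (rule has_integral_le[OF has_integral_mult_right[OF hJ] has_integral_mult_right[OF hI]])
    fix u assume "u \<in> {0..pi/2}"
    have b: "0 < 1 / x ^ 2" "1 / x ^ 2 \<le> 1" using mfacts[OF x] by auto
    have "(3 + 1 / x ^ 2) * sin u ^ 2 \<le> 4 * 1"
      using b by (intro mult_mono sin2_le) auto
    then have "3 * (1 - 1 / x ^ 2) * sin u ^ 2 \<le> 4 * Y x u" unfolding Y_def by (simp add: algebra_simps)
    then have "3 * (1 - 1 / x ^ 2) * sin u ^ 2 * sqrt (Y x u) \<le> 4 * Y x u * sqrt (Y x u)"
      by (rule mult_right_mono) (use Y_pos[OF x, of u] in simp)
    then show "3 * (1 - 1 / x ^ 2) * (sin u ^ 2 * sqrt (Y x u)) \<le> 4 * (Y x u * sqrt (Y x u))"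
      by (simp add: mult.assoc)
  qed
qed



lemma nu_alg: assumes "K * a1dd = - (e * a1d + 3 * a1)" "K * a2dd = - (e * a2d + 3 * a2)"
  shows "(K::real) * ((a2dd * a1 - a1dd * a2) * (a2d * a2 + a1d * a1) - (a2d * a1 - a1d * a2) * (a2dd * a2 + a2d ^ 2 + a1dd * a1 + a1d ^ 2))
    = (a2d * a1 - a1d * a2) * (3 * (a1 ^ 2 + a2 ^ 2) - K * (a1d ^ 2 + a2d ^ 2))"
  using assms by algebra

lemma Dalg:
  fixes k m i j g h A Gu Hu :: real
  assumes P: "3 * (A ^ 2 + m ^ 4 * (3 / 8) ^ 2) - m * (1 - m) * (9 * (1 / 2) ^ 2 + (4 * m * Gu + m ^ 2 * Hu) ^ 2) > 0"
  assumes k: "k > 0" and m: "0 < m" "m \<le> 2/3"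
    and i: "k * A \<le> i" and A: "0 < A"
    and g: "k * (3 / 8) \<le> g" "g \<le> k * Gu"
    and j: "0 \<le> j" "j \<le> k / 2"
    and h: "0 \<le> h" "h \<le> k * Hu"
  shows "3 * (i ^ 2 + m ^ 4 * g ^ 2) - m * (1 - m) * (9 * j ^ 2 + (4 * m * g + m ^ 2 * h) ^ 2) > 0"
proof -
  have i2: "(k * A) ^ 2 \<le> i ^ 2" using i A k by (intro power_mono) auto
  have g2: "(k * (3 / 8)) ^ 2 \<le> g ^ 2" using g k by (intro power_mono) auto
  have j2: "j ^ 2 \<le> (k / 2) ^ 2" using j by (intro power_mono) auto
  have q0: "0 \<le> 4 * m * g + m ^ 2 * h" using m g h k by (intro add_nonneg_nonneg mult_nonneg_nonneg) auto
  have q1: "4 * m * g + m ^ 2 * h \<le> k * (4 * m * Gu + m ^ 2 * Hu)"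
  proof -
    have "4 * m * g \<le> 4 * m * (k * Gu)" using g m by (intro mult_left_mono) auto
    moreover have "m ^ 2 * h \<le> m ^ 2 * (k * Hu)" using h by (intro mult_left_mono) auto
    ultimately show ?thesis by (simp add: algebra_simps)
  qed
  have q2: "(4 * m * g + m ^ 2 * h) ^ 2 \<le> (k * (4 * m * Gu + m ^ 2 * Hu)) ^ 2" using q0 q1 by (intro power_mono) auto
  have mm: "0 \<le> m * (1 - m)" using m by simp
  have t1: "m ^ 4 * (k * (3 / 8)) ^ 2 \<le> m ^ 4 * g ^ 2" using g2 by (intro mult_left_mono) auto
  have t2: "m * (1 - m) * (9 * j ^ 2 + (4 * m * g + m ^ 2 * h) ^ 2) \<le> m * (1 - m) * (9 * (k / 2) ^ 2 + (k * (4 * m * Gu + m ^ 2 * Hu)) ^ 2)"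
    using j2 q2 mm by (intro mult_left_mono) auto
  have e: "3 * ((k * A) ^ 2 + m ^ 4 * (k * (3 / 8)) ^ 2) - m * (1 - m) * (9 * (k / 2) ^ 2 + (k * (4 * m * Gu + m ^ 2 * Hu)) ^ 2)
     = k ^ 2 * (3 * (A ^ 2 + m ^ 4 * (3 / 8) ^ 2) - m * (1 - m) * (9 * (1 / 2) ^ 2 + (4 * m * Gu + m ^ 2 * Hu) ^ 2))"
    by (simp add: power2_eq_square algebra_simps)
  have "0 < k ^ 2 * (3 * (A ^ 2 + m ^ 4 * (3 / 8) ^ 2) - m * (1 - m) * (9 * (1 / 2) ^ 2 + (4 * m * Gu + m ^ 2 * Hu) ^ 2))"
    using P k by simp
  moreover have t3: "3 * ((k * A) ^ 2 + m ^ 4 * (k * (3 / 8)) ^ 2) \<le> 3 * (i ^ 2 + m ^ 4 * g ^ 2)" by (intro mult_left_mono add_mono i2 t1) simp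
  ultimately show ?thesis unfolding e[symmetric] using t2 t3
    by (rule_tac order.strict_trans2[OF _ diff_mono]) auto

qed


lemma m_le: assumes "1 < (x::real)" "x \<le> 1.732" shows "1 - 1 / x ^ 2 \<le> 2 / 3"
proof -
  have "x ^ 2 \<le> 1.732 ^ 2" using assms by (intro power_mono) auto
  also have "\<dots> \<le> 3" by (simp add: power2_eq_square)
  finally have x2: "x ^ 2 \<le> 3" .
  have "x ^ 2 > 0" using assms by simp
  then have "1 / 3 \<le> 1 / x ^ 2" using x2 by (simp add: divide_le_eq le_divide_eq)
  then show ?thesis by simp
qed

lemma aux_pos: "0 \<le> (t::real) ^ 3 \<Longrightarrow> t \<le> 1 \<Longrightarrow> 0 < 1 - 3 * t / 4 + 5 * t ^ 3 / 32"
  by linarith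

lemma Dpos: assumes x: "x > 1" and m: "1 - 1 / x ^ 2 \<le> 2 / 3"
  shows "3 * (P1 x ^ 2 + P2 x ^ 2) - x ^ 2 * (x ^ 2 - 1) * (P1d x ^ 2 + P2d x ^ 2) > 0"
proof -
  define mm where "mm = 1 - 1 / x ^ 2"
  have x0: "x \<noteq> 0" using x by simp
  have mm1: "1 - mm = 1 / x ^ 2" unfolding mm_def by simp
  have e: "3 * (P1 x ^ 2 + P2 x ^ 2) - x ^ 2 * (x ^ 2 - 1) * (P1d x ^ 2 + P2d x ^ 2)
     = 9 / 4 * (3 * (I1 x ^ 2 + mm ^ 4 * G x ^ 2) - mm * (1 - mm) * (9 * J1 x ^ 2 + (4 * mm * G x + mm ^ 2 * H x) ^ 2))"
    unfolding P1_def P2_def P1d_def P2d_def mm1 unfolding mm_def using x0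
    by (simp add: field_simps power2_eq_square power3_eq_cube power4_eq_xxxx)
  have "3 * (I1 x ^ 2 + mm ^ 4 * G x ^ 2) - mm * (1 - mm) * (9 * J1 x ^ 2 + (4 * mm * G x + mm ^ 2 * H x) ^ 2) > 0"
  proof (rule Dalg[where k = "pi / 2" and A = "1 - 3 * (1 - mm) / 4 + 5 * (1 - mm) ^ 3 / 32"
        and Gu = "3 / 8 + 5 * mm / 32 + 35 * mm ^ 2 / 128" and Hu = "5 / 16 + 105 * mm / 256 + 63 * mm ^ 2 / 32"])
    show "0 < mm" unfolding mm_def using mfacts[OF x] by simp
    show "mm \<le> 2 / 3" unfolding mm_def using m .
    then show "3 * ((1 - 3 * (1 - mm) / 4 + 5 * (1 - mm) ^ 3 / 32) ^ 2 + mm ^ 4 * (3 / 8) ^ 2) -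
        mm * (1 - mm) * (9 * (1 / 2) ^ 2 + (4 * mm * (3 / 8 + 5 * mm / 32 + 35 * mm ^ 2 / 128) + mm ^ 2 * (5 / 16 + 105 * mm / 256 + 63 * mm ^ 2 / 32)) ^ 2) > 0"
      using \<open>0 < mm\<close> by (rule Ppos[rotated])
    show "0 < pi / 2" by simp
    show "pi / 2 * (1 - 3 * (1 - mm) / 4 + 5 * (1 - mm) ^ 3 / 32) \<le> I1 x"
      using BI1[OF x] unfolding mm1 by (simp add: algebra_simps)
    show "0 < 1 - 3 * (1 - mm) / 4 + 5 * (1 - mm) ^ 3 / 32"
    proof -
      have "0 \<le> (1 - mm) ^ 3" "1 - mm \<le> 1" unfolding mm1 using mfacts[OF x] by auto
      then show ?thesis by (rule aux_pos)
    qed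
    show "pi / 2 * (3 / 8) \<le> G x" using BG[OF x] by simp
    show "G x \<le> pi / 2 * (3 / 8 + 5 * mm / 32 + 35 * mm ^ 2 / 128)" using BGu[OF x m] unfolding mm_def .
    show "0 \<le> J1 x" using BJ1[OF x] by simp
    show "J1 x \<le> pi / 2 / 2" using BJ1[OF x] by simp
    show "0 \<le> H x" using BH[OF x] pi_gt_zero by linarith
    show "H x \<le> pi / 2 * (5 / 16 + 105 * mm / 256 + 63 * mm ^ 2 / 32)" using BHu[OF x m] unfolding mm_def .
  qed
  then show ?thesis unfolding e by simp
qed

lemma Apos: assumes x: "x > 1" shows "P2d x * P1 x - P1d x * P2 x > 0"
proof -
  define mm where "mm = 1 - 1 / x ^ 2"
  have x0: "x > 0" using x by simp
  have e: "P2d x * P1 x - P1d x * P2 x = 9 / (4 * x ^ 3) * (mm * G x * (4 * I1 x - 3 * mm * J1 x) + mm ^ 2 * H x * I1 x)"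
    unfolding P1_def P2_def P1d_def P2d_def mm_def using x0
    by (simp add: field_simps power2_eq_square power3_eq_cube)
  have m0: "0 < mm" unfolding mm_def using mfacts[OF x] by simp
  have G0: "0 \<le> G x" using BG[OF x] pi_gt_zero by linarith
  have H0: "0 < H x" using BH[OF x] pi_gt_zero by linarith
  have I0: "0 < I1 x"
  proof -
    have "0 \<le> (1 / x ^ 2) ^ 3" "1 / x ^ 2 \<le> 1" using mfacts[OF x] by auto
    then have "0 < 1 - 3 / 4 * (1 / x ^ 2) + 5 / 32 * (1 / x ^ 2) ^ 3" by linarith
    then have "0 < pi / 2 * (1 - 3 / 4 * (1 / x ^ 2) + 5 / 32 * (1 / x ^ 2) ^ 3)" by simp
    then show ?thesis using BI1[OF x] by linarith
  qed
  have a1: "0 \<le> mm * G x * (4 * I1 x - 3 * mm * J1 x)"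
    using BA[OF x] m0 G0 unfolding mm_def[symmetric] by (intro mult_nonneg_nonneg) auto
  have a2: "0 < mm ^ 2 * H x * I1 x" using m0 H0 I0 by simp
  have "0 < 9 / (4 * x ^ 3)" using x0 by simp
  then show ?thesis unfolding e using a1 a2 by simp
qed

lemma powr32: "0 < (y::real) \<Longrightarrow> y powr (3 / 2) = y * sqrt y"
proof -
  assume y: "0 < y"
  have "y powr (3 / 2) = y powr (1 + 1 / 2)" by simp
  also have "\<dots> = y powr 1 * y powr (1 / 2)" by (rule powr_add)
  also have "\<dots> = y * sqrt y" using y by (simp add: powr_half_sqrt)
  finally show ?thesis .
qed

lemma psi1_eq: assumes "x > 1" shows "psi1 x = P1 x"
proof -
  have "(\<lambda>u. (1 - sin u ^ 2 / x ^ 2) powr (3 / 2)) = (\<lambda>u. Y x u * sqrt (Y x u))"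
    by (rule ext) (use Y_pos[OF assms] in \<open>simp add: Y_def powr32\<close>)
  then show ?thesis unfolding psi1_def P1_def I1_def by simp
qed

lemma psi2_eq: "psi2 x = P2 x"
  unfolding psi2_def P2_def G_def Z_def by simp

lemma psi1_D: assumes "x > 1" shows "(psi1 has_real_derivative P1d x) (at x)"
  by (rule has_field_derivative_transform_within_open[OF P1_deriv[OF assms], of "{1<..}"]) (use assms psi1_eq in auto)

lemma psi2_D: assumes "x > 1" shows "(psi2 has_real_derivative P2d x) (at x)"
proof -
  have "psi2 = P2" using psi2_eq by (rule ext)
  then show ?thesis using P2_deriv[OF assms] by simp
qed

lemma dpsi1: "x > 1 \<Longrightarrow> deriv psi1 x = P1d x" using psi1_D by (rule DERIV_imp_deriv)
lemma dpsi2: "x > 1 \<Longrightarrow> deriv psi2 x = P2d x" using psi2_D by (rule DERIV_imp_deriv)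

lemma phi1_D: assumes "x > 1" shows "(phi1 has_real_derivative 4 / (3 * pi) * P1d x) (at x)"
  unfolding phi1_def[abs_def] by (rule DERIV_cmult[OF psi1_D[OF assms]])
lemma phi2_D: assumes "x > 1" shows "(phi2 has_real_derivative 16 / (3 * pi) * P2d x) (at x)"
  unfolding phi2_def[abs_def] by (rule DERIV_cmult[OF psi2_D[OF assms]])
lemma dphi1: "x > 1 \<Longrightarrow> deriv phi1 x = 4 / (3 * pi) * P1d x" using phi1_D by (rule DERIV_imp_deriv)
lemma dphi2: "x > 1 \<Longrightarrow> deriv phi2 x = 16 / (3 * pi) * P2d x" using phi2_D by (rule DERIV_imp_deriv)

definition NA :: "real \<Rightarrow> real" where
  "NA x = 16 / (3 * pi) * P2d x * (4 / (3 * pi) * P1 x) - 4 / (3 * pi) * P1d x * (16 / (3 * pi) * P2 x)"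
definition NB :: "real \<Rightarrow> real" where
  "NB x = 16 / (3 * pi) * P2d x * (16 / (3 * pi) * P2 x) + 16 * (4 / (3 * pi) * P1d x) * (4 / (3 * pi) * P1 x)"
definition NA' :: "real \<Rightarrow> real" where
  "NA' x = 16 / (3 * pi) * 4 / (3 * pi) * (P2dd x * P1 x - P1dd x * P2 x)"
definition NB' :: "real \<Rightarrow> real" where
  "NB' x = (16 / (3 * pi)) ^ 2 * (P2dd x * P2 x + P2d x ^ 2 + P1dd x * P1 x + P1d x ^ 2)"

lemma nuA_eq: "x > 1 \<Longrightarrow> nuA x = NA x"
  unfolding nuA_def NA_def by (simp add: dphi1 dphi2 phi1_def phi2_def psi1_eq psi2_eq)
lemma nuB_eq: "x > 1 \<Longrightarrow> nuB x = NB x"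
  unfolding nuB_def NB_def by (simp add: dphi1 dphi2 phi1_def phi2_def psi1_eq psi2_eq)

lemma NA_D: assumes "x > 1" shows "(NA has_real_derivative NA' x) (at x)"
  unfolding NA_def[abs_def] NA'_def
  by (rule deriv_eq[OF DERIV_diff[OF DERIV_mult[OF DERIV_cmult[OF P2d_deriv[OF assms]] DERIV_cmult[OF P1_deriv[OF assms]]]
         DERIV_mult[OF DERIV_cmult[OF P1d_deriv[OF assms]] DERIV_cmult[OF P2_deriv[OF assms]]]]])
     (simp add: field_simps)

lemma NB_D: assumes "x > 1" shows "(NB has_real_derivative NB' x) (at x)"
  unfolding NB_def[abs_def] NB'_def
  by (rule deriv_eq[OF DERIV_add[OF DERIV_mult[OF DERIV_cmult[OF P2d_deriv[OF assms]] DERIV_cmult[OF P2_deriv[OF assms]]]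
         DERIV_mult[OF DERIV_cmult[OF DERIV_cmult[OF P1d_deriv[OF assms]]] DERIV_cmult[OF P1_deriv[OF assms]]]]])
     (simp add: field_simps power2_eq_square)

lemma nuA_D: assumes "x > 1" shows "deriv nuA x = NA' x"
  by (rule DERIV_imp_deriv, rule has_field_derivative_transform_within_open[OF NA_D[OF assms], of "{1<..}"])
     (use assms nuA_eq in auto)
lemma nuB_D: assumes "x > 1" shows "deriv nuB x = NB' x"
  by (rule DERIV_imp_deriv, rule has_field_derivative_transform_within_open[OF NB_D[OF assms], of "{1<..}"])
     (use assms nuB_eq in auto)

lemma key: assumes x: "x > 1"
  shows "x ^ 2 * (x ^ 2 - 1) * ((P2dd x * P1 x - P1dd x * P2 x) * (P2d x * P2 x + P1d x * P1 x)
      - (P2d x * P1 x - P1d x * P2 x) * (P2dd x * P2 x + P2d x ^ 2 + P1dd x * P1 x + P1d x ^ 2))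
    = (P2d x * P1 x - P1d x * P2 x) * (3 * (P1 x ^ 2 + P2 x ^ 2) - x ^ 2 * (x ^ 2 - 1) * (P1d x ^ 2 + P2d x ^ 2))"
proof (rule nu_alg)
  show "x ^ 2 * (x ^ 2 - 1) * P1dd x = - (x * (x ^ 2 - 3) * P1d x + 3 * P1 x)" using P1_ode[OF x] by linarith
  show "x ^ 2 * (x ^ 2 - 1) * P2dd x = - (x * (x ^ 2 - 3) * P2d x + 3 * P2 x)" using P2_ode[OF x] by linarith
qed

lemma nu_alg2: assumes "(c2::real) ^ 2 = 16 * c1 ^ 2" and "cc = c2 * c1"
  shows "cc * (qdd * p - pdd * q) * (c2 * qd * (c2 * q) + 16 * (c1 * pd) * (c1 * p))
    - (c2 * qd * (c1 * p) - c1 * pd * (c2 * q)) * (c2 ^ 2 * (qdd * q + qd ^ 2 + pdd * p + pd ^ 2))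
    = cc * c2 ^ 2 * ((qdd * p - pdd * q) * (qd * q + pd * p) - (qd * p - pd * q) * (qdd * q + qd ^ 2 + pdd * p + pd ^ 2))"
  using assms by algebra

lemma nu_pos: assumes x: "x > 1" and m: "1 - 1 / x ^ 2 \<le> 2 / 3" shows "nu x > 0"
proof -
  define K where "K = x ^ 2 * (x ^ 2 - 1)"
  define Br where "Br = (P2dd x * P1 x - P1dd x * P2 x) * (P2d x * P2 x + P1d x * P1 x)
      - (P2d x * P1 x - P1d x * P2 x) * (P2dd x * P2 x + P2d x ^ 2 + P1dd x * P1 x + P1d x ^ 2)"
  have K0: "K > 0" unfolding K_def using x by (simp add: one_less_power)
  have "K * Br > 0" unfolding K_def Br_def key[OF x]
    using Apos[OF x] Dpos[OF x m] by simp
  then have Br0: "Br > 0" using K0 by (simp add: zero_less_mult_iff)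
  have c: "(16 / (3 * pi)) ^ 2 = 16 * (4 / (3 * pi)) ^ 2" by (simp add: power2_eq_square)
  have "nu x = (16 / (3 * pi) * 4 / (3 * pi)) * (16 / (3 * pi)) ^ 2 * Br"
    unfolding nu_def nuA_D[OF x] nuB_D[OF x] nuA_eq[OF x] nuB_eq[OF x] NA_def NB_def NA'_def NB'_def Br_def
    using nu_alg2[OF c, where cc = "16 / (3 * pi) * 4 / (3 * pi)" and qdd = "P2dd x" and p = "P1 x" and pdd = "P1dd x"
      and q = "P2 x" and qd = "P2d x" and pd = "P1d x"]
    by (simp add: mult.assoc)
  moreover have "(16 / (3 * pi) * 4 / (3 * pi)) * (16 / (3 * pi)) ^ 2 > 0" by simp
  ultimately show ?thesis using Br0 by simp
qed

definition Aw :: "real \<Rightarrow> real" where "Aw x = P2d x * P1 x - P1d x * P2 x"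
definition Bw :: "real \<Rightarrow> real" where "Bw x = P2d x * P2 x + P1d x * P1 x"

lemma mu_eq: "x > 1 \<Longrightarrow> mu x = Bw x / Aw x"
  unfolding mu_def Aw_def Bw_def by (simp add: dpsi1 dpsi2 psi1_eq psi2_eq)

lemma mu_D: assumes x: "x > 1" and m: "1 - 1 / x ^ 2 \<le> 2 / 3"
  shows "\<exists>y. (mu has_real_derivative y) (at x) \<and> y < 0"
proof -
  define Aw' where "Aw' = P2dd x * P1 x + P2d x * P1d x - (P1dd x * P2 x + P1d x * P2d x)"
  define Bw' where "Bw' = P2dd x * P2 x + P2d x * P2d x + (P1dd x * P1 x + P1d x * P1d x)"
  have A0: "Aw x \<noteq> 0" using Apos[OF x] unfolding Aw_def by simp
  have dA: "(Aw has_real_derivative Aw') (at x)" unfolding Aw_def[abs_def]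
    by (rule deriv_eq[OF DERIV_diff[OF DERIV_mult[OF P2d_deriv[OF x] P1_deriv[OF x]] DERIV_mult[OF P1d_deriv[OF x] P2_deriv[OF x]]]])
       (simp add: Aw'_def algebra_simps)
  have dB: "(Bw has_real_derivative Bw') (at x)" unfolding Bw_def[abs_def]
    by (rule deriv_eq[OF DERIV_add[OF DERIV_mult[OF P2d_deriv[OF x] P2_deriv[OF x]] DERIV_mult[OF P1d_deriv[OF x] P1_deriv[OF x]]]])
       (simp add: Bw'_def algebra_simps)
  have dq: "((\<lambda>y. Bw y / Aw y) has_real_derivative (Bw' * Aw x - Bw x * Aw') / (Aw x * Aw x)) (at x)"
    by (rule DERIV_divide[OF dB dA A0])
  have dmu: "(mu has_real_derivative (Bw' * Aw x - Bw x * Aw') / (Aw x * Aw x)) (at x)"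
    by (rule has_field_derivative_transform_within_open[OF dq, of "{1<..}"]) (use x mu_eq in auto)
  define K where "K = x ^ 2 * (x ^ 2 - 1)"
  have K0: "K > 0" unfolding K_def using x by (simp add: one_less_power)
  have "K * (Bw' * Aw x - Bw x * Aw') = - (Aw x * (3 * (P1 x ^ 2 + P2 x ^ 2) - x ^ 2 * (x ^ 2 - 1) * (P1d x ^ 2 + P2d x ^ 2)))"
    unfolding key[OF x, symmetric] K_def Aw_def Bw_def Aw'_def Bw'_def by (simp add: algebra_simps power2_eq_square)
  moreover have "0 < Aw x * (3 * (P1 x ^ 2 + P2 x ^ 2) - x ^ 2 * (x ^ 2 - 1) * (P1d x ^ 2 + P2d x ^ 2))"
    using Apos[OF x] Dpos[OF x m] unfolding Aw_def by simp
  ultimately have "K * (Bw' * Aw x - Bw x * Aw') < 0" by linarith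
  then have "Bw' * Aw x - Bw x * Aw' < 0" using K0 by (simp add: mult_less_0_iff)
  moreover have "0 < Aw x * Aw x" using A0 by (metis not_real_square_gt_zero)
  ultimately have "(Bw' * Aw x - Bw x * Aw') / (Aw x * Aw x) < 0" by (simp add: divide_neg_pos)
  then show ?thesis using dmu by blast
qed

lemma part1: "\<forall>x::real. 1 < x \<and> x \<le> 1.732 \<longrightarrow> nu x > 0"
  using nu_pos m_le by auto

lemma part2: "\<forall>x y::real. 1 < x \<and> x < y \<and> y \<le> 1.732 \<longrightarrow> mu y < mu x"
proof (intro allI impI)
  fix x y :: real assume a: "1 < x \<and> x < y \<and> y \<le> 1.732"
  show "mu y < mu x"
  proof (rule DERIV_neg_imp_decreasing[of x y mu])
    show "x < y" using a by simp
    fix z assume "x \<le> z" "z \<le> y"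
    then have z: "1 < z" "z \<le> 1.732" using a by auto
    show "\<exists>d. DERIV mu z :> d \<and> d < 0" using mu_D[OF z(1) m_le[OF z]] .
  qed
qed

theorem mainTheorem12:
  shows "(\<forall>x::real. 1 < x \<and> x \<le> 1.732 \<longrightarrow> nu x > 0) \<and>
         (\<forall>x y::real. 1 < x \<and> x < y \<and> y \<le> 1.732 \<longrightarrow> mu y < mu x)"
  using part1 part2 by blast

end
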